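(* For all integers $d \geq 1$, $r \geq 2$ and $k > 2r(d-1)$, there exists a constant $C$ such that for all $n > k$, $$f(n,k,d,r) \leq n\,\frac{k-2r(d-1)}{r\,(k-(r+1)(d-1))} + C.$$ In particular, $f(n,k,d,2) \leq \frac{k-4d+4}{2(k-3d+3)}\,n + C$.
   Context: All graphs are finite, simple and undirected. The order of a graph is its number of vertices. For a graph $G$ and positive integers $d, r$, let $f_G(d,r)$ be the largest integer $t$ such that in every coloring of the edges of $G$ with $r$ colors there is a monochromatic subgraph (all of its edges of one color) with minimum degree at least $d$ and order at least $t$. For integers $n > k > d$, let $f(n,k,d,r)$ be the minimum of $f_G(d,r)$ over all graphs $G$ with $n$ vertices and minimum degree at least $k$. *)

theory Defs
  imports Complex_Main
begin

definition simple_graph :: "'a set \<Rightarrow> 'a set set \<Rightarrow> bool" where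
  "simple_graph V E \<longleftrightarrow> finite V \<and> (\<forall>e\<in>E. e \<subseteq> V \<and> card e = 2)"

definition degree :: "'a set set \<Rightarrow> 'a \<Rightarrow> nat" where
  "degree E v = card {e \<in> E. v \<in> e}"

definition min_degree_ge :: "'a set \<Rightarrow> 'a set set \<Rightarrow> nat \<Rightarrow> bool" where
  "min_degree_ge V E k \<longleftrightarrow> (\<forall>v\<in>V. degree E v \<ge> k)"

definition mono_subgraph ::
  "'a set \<Rightarrow> 'a set set \<Rightarrow> ('a set \<Rightarrow> nat) \<Rightarrow> nat \<Rightarrow> 'a set \<Rightarrow> 'a set set \<Rightarrow> bool" where
  "mono_subgraph V E c i W F \<longleftrightarrow> W \<subseteq> V \<and> F \<subseteq> E \<and> (\<forall>e\<in>F. e \<subseteq> W \<and> c e = i)"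

definition edge_colouring :: "'a set set \<Rightarrow> nat \<Rightarrow> ('a set \<Rightarrow> nat) \<Rightarrow> bool" where
  "edge_colouring E r c \<longleftrightarrow> (\<forall>e\<in>E. c e < r)"

definition fG :: "'a set \<Rightarrow> 'a set set \<Rightarrow> nat \<Rightarrow> nat \<Rightarrow> nat" where
  "fG V E d r = (GREATEST t. \<forall>c. edge_colouring E r c \<longrightarrow>
      (\<exists>i W F. mono_subgraph V E c i W F \<and> min_degree_ge W F d \<and> card W \<ge> t))"

text \<open>f(n,k,d,r): minimum of f_G(d,r) over graphs with n vertices and minimum degree
  at least k (vertex set taken as {0..<n}, w.l.o.g. up to isomorphism).\<close>
definition f :: "nat \<Rightarrow> nat \<Rightarrow> nat \<Rightarrow> nat \<Rightarrow> nat" where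
  "f n k d r = Min {fG {0..<n} E d r | E. simple_graph {0..<n} E \<and> min_degree_ge {0..<n} E k}"

end

theory Submission
  imports Defs
begin

lemma degree_ge:
  assumes "finite E" "finite A" "\<forall>u\<in>A. {u,v} \<in> E \<and> u \<noteq> v"
  shows "card A \<le> degree E v"
proof -
  have inj: "inj_on (\<lambda>u. {u,v}) A" using assms(3) by (auto simp: inj_on_def doubleton_eq_iff)
  have "(\<lambda>u. {u,v}) ` A \<subseteq> {e\<in>E. v \<in> e}" using assms(3) by auto
  then have "card ((\<lambda>u. {u,v}) ` A) \<le> card {e\<in>E. v \<in> e}"
    by (intro card_mono) (use assms(1) in auto)
  then show ?thesis using card_image[OF inj] by (simp add: degree_def)
qed

lemma fG_le:
  assumes "edge_colouring E r c"
    and "\<And>i W F. mono_subgraph V E c i W F \<Longrightarrow> min_degree_ge W F d \<Longrightarrow> card W \<le> T"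
  shows "fG V E d r \<le> T"
proof -
  let ?P = "\<lambda>t. \<forall>c. edge_colouring E r c \<longrightarrow>
      (\<exists>i W F. mono_subgraph V E c i W F \<and> min_degree_ge W F d \<and> card W \<ge> t)"
  have P0: "?P 0" by (auto simp: mono_subgraph_def min_degree_ge_def intro!: exI[of _ "{}"])
  have bnd: "\<forall>y. ?P y \<longrightarrow> y \<le> T"
  proof (intro allI impI)
    fix y assume "?P y"
    then obtain i W F where "mono_subgraph V E c i W F" "min_degree_ge W F d" "card W \<ge> y"
      using assms(1) by blast
    then show "y \<le> T" using assms(2) by fastforce
  qed
  have "?P (Greatest ?P)" by (rule GreatestI_nat[where P="?P", OF P0]) (use bnd in blast)
  then have "Greatest ?P \<le> T" using bnd by blast
  then show ?thesis by (simp add: fG_def)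
qed

lemma fG_le_card:
  assumes "finite V" "r > 0"
  shows "fG V E d r \<le> card V"
  by (rule fG_le[where c="\<lambda>_. 0"]) (use assms in \<open>auto simp: edge_colouring_def mono_subgraph_def intro: card_mono\<close>)

lemma peel:
  fixes \<rho> :: "'a \<Rightarrow> nat"
  assumes ms: "mono_subgraph V E c j W F" and md: "min_degree_ge W F (Suc D)"
    and fin: "finite V" and sg: "\<forall>e\<in>E. card e = 2"
    and cond: "\<And>v. v \<in> V \<Longrightarrow> v \<notin> S \<Longrightarrow>
        card {u\<in>V. {u,v} \<in> E \<and> c {u,v} = j \<and> (u \<in> S \<or> \<rho> u \<ge> \<rho> v) \<and> u \<noteq> v} \<le> D"
  shows "W \<subseteq> S"
proof (rule ccontr)
  assume "\<not> W \<subseteq> S"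
  then obtain w where "w \<in> W - S" by blast
  obtain v where v: "v \<in> W - S" and vmin: "\<And>x. x \<in> W - S \<Longrightarrow> \<rho> v \<le> \<rho> x"
  proof -
    from ex_has_least_nat[of "\<lambda>x. x \<in> W - S" w \<rho>] \<open>w \<in> W - S\<close>
    obtain v where "v \<in> W - S \<and> (\<forall>y. y \<in> W - S \<longrightarrow> \<rho> v \<le> \<rho> y)" by blast
    then show ?thesis using that by blast
  qed
  have WV: "W \<subseteq> V" and FE: "F \<subseteq> E" and Fe: "\<forall>e\<in>F. e \<subseteq> W \<and> c e = j"
    using ms unfolding mono_subgraph_def by blast+
  define N where "N = {u\<in>V. {u,v} \<in> E \<and> c {u,v} = j \<and> (u \<in> S \<or> \<rho> u \<ge> \<rho> v) \<and> u \<noteq> v}"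
  have sub: "{e\<in>F. v \<in> e} \<subseteq> (\<lambda>u. {u,v}) ` N"
  proof
    fix e assume e: "e \<in> {e\<in>F. v \<in> e}"
    then have eF: "e \<in> F" and ve: "v \<in> e" by auto
    then have "card e = 2" using sg FE by blast
    then obtain a b where ab: "e = {a,b}" "a \<noteq> b" unfolding card_2_iff by blast
    obtain u where u: "e = {u,v}" "u \<noteq> v"
    proof (cases "a = v")
      case True then have "e = {b,v}" "b \<noteq> v" using ab by auto
      then show ?thesis using that by blast
    next
      case False then have "b = v" using ab ve by blast
      then show ?thesis using that ab by blast
    qed
    have "e \<subseteq> W" "c e = j" using Fe eF by auto
    then have uW: "u \<in> W" using u by blast
    have "u \<in> S \<or> \<rho> u \<ge> \<rho> v"
    proof (cases "u \<in> S")
      case False then show ?thesis using vmin uW by blast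
    qed simp
    moreover have "u \<in> V" using uW WV by blast
    moreover have "{u,v} \<in> E" using u eF FE by blast
    ultimately have "u \<in> N" unfolding N_def using u \<open>c e = j\<close> by blast
    then show "e \<in> (\<lambda>u. {u,v}) ` N" using u by blast
  qed
  have "finite N" using fin unfolding N_def by auto
  then have "card {e\<in>F. v \<in> e} \<le> card ((\<lambda>u. {u,v}) ` N)"
    using sub by (intro card_mono) auto
  also have "\<dots> \<le> card N" using \<open>finite N\<close> by (rule card_image_le)
  also have "\<dots> \<le> D" using cond v WV unfolding N_def by blast
  finally have "degree F v \<le> D" by (simp add: degree_def)
  moreover have "degree F v \<ge> Suc D" using md v unfolding min_degree_ge_def by blast
  ultimately show False by simp
qed

lemma f_le:
  assumes "simple_graph {0..<n} E" "min_degree_ge {0..<n} E k" "r > 0"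
  shows "f n k d r \<le> fG {0..<n} E d r"
proof -
  define A where "A = {fG {0..<n} E d r | E. simple_graph {0..<n} E \<and> min_degree_ge {0..<n} E k}"
  have "A \<subseteq> {0..n}"
  proof
    fix x assume "x \<in> A"
    then obtain E' where "x = fG {0..<n} E' d r" unfolding A_def by blast
    then have "x \<le> n" using fG_le_card[OF _ assms(3), of "{0..<n}" E' d] by simp
    then show "x \<in> {0..n}" by simp
  qed
  then have "finite A" using finite_subset by blast
  moreover have "fG {0..<n} E d r \<in> A" unfolding A_def using assms by blast
  ultimately have "Min A \<le> fG {0..<n} E d r" by (rule Min_le)
  then show ?thesis unfolding f_def A_def .
qed

lemma complete_ok:
  assumes "n > k"
  shows "simple_graph {0..<n} {e. e \<subseteq> {0..<n} \<and> card e = 2}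
    \<and> min_degree_ge {0..<n} {e. e \<subseteq> {0..<n} \<and> card e = 2} k"
proof -
  define E where "E = {e. e \<subseteq> {0..<n::nat} \<and> card e = 2}"
  have "E \<subseteq> Pow {0..<n}" unfolding E_def by blast
  then have fE: "finite E" by (meson finite_Pow_iff finite_atLeastLessThan finite_subset)
  have "simple_graph {0..<n} E" unfolding simple_graph_def E_def by blast
  moreover have "min_degree_ge {0..<n} E k"
    unfolding min_degree_ge_def
  proof
    fix v assume v: "v \<in> {0..<n}"
    have "card ({0..<n} - {v}) \<le> degree E v"
    proof (rule degree_ge[OF fE])
      show "\<forall>u\<in>{0..<n} - {v}. {u, v} \<in> E \<and> u \<noteq> v"
      proof
        fix u assume u: "u \<in> {0..<n} - {v}"
        then have "u \<noteq> v" by blast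
        then have "card {u,v} = 2" by simp
        then show "{u, v} \<in> E \<and> u \<noteq> v" using u v \<open>u \<noteq> v\<close> unfolding E_def by blast
      qed
    qed blast
    moreover have "card ({0..<n} - {v}) = n - 1" using v by (subst card_Diff_singleton) auto
    ultimately show "k \<le> degree E v" using assms by simp
  qed
  ultimately show ?thesis unfolding E_def by blast
qed

lemma f_le_n:
  assumes "n > k" "r > 0"
  shows "f n k d r \<le> n"
proof -
  let ?E = "{e. e \<subseteq> {0..<n} \<and> card e = 2}"
  have "f n k d r \<le> fG {0..<n} ?E d r"
    using complete_ok[OF assms(1)] f_le[OF _ _ assms(2)] by blast
  also have "\<dots> \<le> card {0..<n}" by (rule fG_le_card[OF _ assms(2)]) simp
  finally show ?thesis by simp
qed

locale cons =
  fixes r D p U n :: nat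
  assumes r2: "2 \<le> r" and p1: "1 \<le> p" and U2: "2 \<le> U"
    and big: "(r*(r-1)*D + r*p)*U + 2*(r*D)*(r*D) + r*(2*r*D + p + 1) \<le> n"
begin

definition "q = r*(r-1)*D"
definition "NB = q*U"
definition "X = r*p*U"
definition "K = 2*r*D + p"
definition "R = r*D"
definition "bidx l = (if l < R then l else NB - 2*R + l)"

definition adj :: "nat \<Rightarrow> nat \<Rightarrow> bool" where
 "adj u v \<longleftrightarrow> (v < NB \<and> v - u \<le> R) \<or>
   (u < NB \<and> NB \<le> v \<and> ((v - NB < X \<and> (v-NB) div (r*p) = u div q \<and> (v-NB) mod r = (u mod q) div D div (r-1))
        \<or> (X \<le> v - NB \<and> v - NB < X + 2*R*R \<and> bidx ((v - NB - X) div R) = u))) \<or>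
   (NB \<le> u \<and> (u - NB) mod r = (v - NB) mod r)"

definition jc :: "nat \<Rightarrow> nat \<Rightarrow> nat" where "jc i jj = (if jj < i then jj else Suc jj)"

definition col :: "nat \<Rightarrow> nat \<Rightarrow> nat" where
 "col u v = (if v < NB then (v - u - 1) div D
   else if u < NB then (if v - NB < X then jc ((v-NB) mod r) ((u mod q) div D mod (r-1))
                        else (if (v-NB) mod r = 0 then 1 else 0))
   else (u - NB) mod r)"

definition "EE = {e. \<exists>u v. e = {u,v} \<and> u < v \<and> v < n \<and> adj u v}"
definition "cc e = col (Min e) (Max e)"
definition "SS j = {v. NB \<le> v \<and> v < n \<and> (v - NB) mod r = j}"
definition "rho v = (if v < NB then Suc v else (0::nat))"
definition "M = n - NB"

lemma r_pos: "r > 0" using r2 by simp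

lemma M_big: "X + 2*R*R + r*(K+1) \<le> M"
proof -
  have "(r*(r-1)*D + r*p)*U = NB + X" unfolding NB_def X_def q_def by (simp add: algebra_simps)
  then show ?thesis using big unfolding M_def K_def R_def by simp
qed

lemma NB_ge: "2*R \<le> NB"
proof -
  have "r*D*1 \<le> r*D*(r-1)" using r2 by (intro mult_le_mono2) simp
  then have "R \<le> q" unfolding R_def q_def by (simp add: algebra_simps)
  then have "2*R \<le> q*2" by simp
  also have "\<dots> \<le> q*U" using U2 by (intro mult_le_mono2)
  finally show ?thesis unfolding NB_def .
qed

lemma D_pos_if: "NB > 0 \<Longrightarrow> D > 0" unfolding NB_def q_def by auto

lemma mem_EE: "{a,b} \<in> EE \<longleftrightarrow> (a < b \<and> b < n \<and> adj a b) \<or> (b < a \<and> a < n \<and> adj b a)"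
  unfolding EE_def by (auto simp: doubleton_eq_iff)

lemma cc_ab: "a < b \<Longrightarrow> cc {a,b} = col a b" "b < a \<Longrightarrow> cc {a,b} = col b a"
  unfolding cc_def by (auto simp: min_def max_def)

lemma EE_sub: "EE \<subseteq> Pow {0..<n}" unfolding EE_def by fastforce

lemma fin_EE: "finite EE" using EE_sub by (meson finite_Pow_iff finite_atLeastLessThan finite_subset)

lemma simple: "simple_graph {0..<n} EE"
  unfolding simple_graph_def EE_def by fastforce

end

context cons begin

lemma col_lt: assumes "u < v" "adj u v" shows "col u v < r"
proof (cases "v < NB")
  case True
  then have "v - u \<le> R" using assms unfolding adj_def by auto
  then have "v - u - 1 < r * D" using assms(1) unfolding R_def by linarith
  then show ?thesis using True unfolding col_def by (simp add: less_mult_imp_div_less)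
next
  case False
  show ?thesis
  proof (cases "u < NB")
    case True
    have "(u mod q) div D mod (r-1) < r - 1" using r2 by simp
    then have "jc ((v-NB) mod r) ((u mod q) div D mod (r-1)) < r" unfolding jc_def by auto
    then show ?thesis using False True r2 unfolding col_def by auto
  next
    case False2: False
    then show ?thesis using False r_pos unfolding col_def by auto
  qed
qed

lemma colouring: "edge_colouring EE r cc"
  unfolding edge_colouring_def
proof
  fix e assume "e \<in> EE"
  then obtain u v where "e = {u,v}" "u < v" "adj u v" unfolding EE_def by blast
  then show "cc e < r" using cc_ab col_lt by simp
qed

lemma col_core_ne: assumes "u < NB" "NB \<le> v" shows "col u v \<noteq> (v - NB) mod r"
  using assms unfolding col_def jc_def by auto

end

context cons begin

lemma core_core: assumes "NB \<le> a" "a < b" "adj a b" shows "col a b = (b - NB) mod r"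
proof -
  have h: "\<not> b < NB" "\<not> a < NB" using assms by auto
  then have "(a - NB) mod r = (b - NB) mod r" using assms(3) unfolding adj_def by blast
  moreover have "col a b = (a - NB) mod r" using h unfolding col_def by (simp only: if_False)
  ultimately show ?thesis by simp
qed

lemma div_decomp: assumes "(a::nat) div D = j" "D > 0" shows "a = D*j + a mod D" "a mod D < D"
  using assms by auto

lemma adj_BC: "u < NB \<Longrightarrow> NB \<le> v \<Longrightarrow> adj u v \<Longrightarrow>
   (v - NB < X \<and> (v-NB) div (r*p) = u div q \<and> (v-NB) mod r = (u mod q) div D div (r-1))
        \<or> (X \<le> v - NB \<and> v - NB < X + 2*R*R \<and> bidx ((v - NB - X) div R) = u)"
  unfolding adj_def by simp
lemma adj_CC: "NB \<le> u \<Longrightarrow> u < v \<Longrightarrow> adj u v \<Longrightarrow> (u - NB) mod r = (v - NB) mod r"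
  unfolding adj_def by simp
lemma adj_BB: "u < v \<Longrightarrow> v < NB \<Longrightarrow> adj u v \<Longrightarrow> v - u \<le> R"
  unfolding adj_def by simp
lemma col_BB: "v < NB \<Longrightarrow> col u v = (v - u - 1) div D"
  unfolding col_def by simp
lemma col_unit: "u < NB \<Longrightarrow> NB \<le> v \<Longrightarrow> v - NB < X \<Longrightarrow> col u v = jc ((v-NB) mod r) ((u mod q) div D mod (r-1))"
  unfolding col_def by simp

lemma peel_B:
  assumes t: "t < NB"
  shows "card {u\<in>{0..<n}. {u,t} \<in> EE \<and> cc {u,t} = j \<and> (u \<in> SS j \<or> rho u \<ge> rho t) \<and> u \<noteq> t} \<le> D"
proof -
  have Dp: "D > 0" using D_pos_if t by simp
  have "{u\<in>{0..<n}. {u,t} \<in> EE \<and> cc {u,t} = j \<and> (u \<in> SS j \<or> rho u \<ge> rho t) \<and> u \<noteq> t}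
        \<subseteq> {Suc t + D*j ..< Suc t + D*j + D}"
  proof
    fix u assume u: "u \<in> {u\<in>{0..<n}. {u,t} \<in> EE \<and> cc {u,t} = j \<and> (u \<in> SS j \<or> rho u \<ge> rho t) \<and> u \<noteq> t}"
    show "u \<in> {Suc t + D*j ..< Suc t + D*j + D}"
    proof (cases "u < NB")
      case False
      then have "rho u < rho t" using t unfolding rho_def by simp
      then have "u \<in> SS j" using u by auto
      then have "(u - NB) mod r = j" unfolding SS_def by blast
      moreover have "t < u" using False t by simp
      moreover have "cc {u,t} = col t u" using cc_ab \<open>t < u\<close> by simp
      ultimately have "col t u = (u - NB) mod r" using u by simp
      then show ?thesis using col_core_ne[OF t] False by simp
    next
      case True
      then have "rho u \<ge> rho t \<or> u \<in> SS j" using u by blast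
      then have "rho u \<ge> rho t" using True unfolding SS_def by auto
      then have "t < u" using True t u unfolding rho_def by auto
      then have a: "adj t u" and cj: "col t u = j" using u mem_EE cc_ab by auto
      then have "u - t \<le> R" using True unfolding adj_def by auto
      have "(u - t - 1) div D = j" using cj True unfolding col_def by simp
      then have "u - t - 1 = D*j + (u - t - 1) mod D" "(u - t - 1) mod D < D"
        using div_decomp[OF _ Dp] by blast+
      then show ?thesis using \<open>t < u\<close> by auto
    qed
  qed
  then have "card {u\<in>{0..<n}. {u,t} \<in> EE \<and> cc {u,t} = j \<and> (u \<in> SS j \<or> rho u \<ge> rho t) \<and> u \<noteq> t}
     \<le> card {Suc t + D*j ..< Suc t + D*j + D}" by (intro card_mono) auto
  then show ?thesis by simp
qed

end

context cons begin

lemma unit_decomp: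
  assumes "u < NB" "(u mod q) div D div (r-1) = i" "jc i ((u mod q) div D mod (r-1)) = j" "i \<noteq> j"
  shows "u \<in> {q*(u div q) + D*((r-1)*i + (if j < i then j else j - 1)) ..<
               q*(u div q) + D*((r-1)*i + (if j < i then j else j - 1)) + D}"
proof -
  have Dp: "D > 0" using D_pos_if assms(1) by simp
  define g where "g = (u mod q) div D"
  define jj where "jj = g mod (r-1)"
  have jjJ: "jj = (if j < i then j else j - 1)"
    using assms(3,4) unfolding jc_def jj_def g_def by (auto split: if_splits)
  have e: "g = (r-1)*(g div (r-1)) + g mod (r-1)" by (metis div_mult_mod_eq mult.commute)
  have h: "g div (r-1) = i" using assms(2) unfolding g_def .
  have g: "g = (r-1)*i + jj" using e unfolding h jj_def .
  have "D dvd q" unfolding q_def by simp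
  then have m: "(u mod q) mod D = u mod D" by (simp add: mod_mod_cancel)
  have "u mod q = D*g + u mod D" unfolding g_def using m by (metis div_mult_mod_eq mult.commute)
  then have "u = q*(u div q) + D*g + u mod D" by (metis add.assoc div_mult_mod_eq mult.commute)
  moreover have "u mod D < D" using Dp by simp
  ultimately show ?thesis using g jjJ by simp
qed

lemma peel_core:
  assumes x: "NB \<le> x" "x < n" and ij: "(x - NB) mod r \<noteq> j"
  shows "card {u\<in>{0..<n}. {u,x} \<in> EE \<and> cc {u,x} = j \<and> (u \<in> SS j \<or> rho u \<ge> rho x) \<and> u \<noteq> x} \<le> D"
proof -
  define A where "A = {u\<in>{0..<n}. {u,x} \<in> EE \<and> cc {u,x} = j \<and> (u \<in> SS j \<or> rho u \<ge> rho x) \<and> u \<noteq> x}"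
  define i where "i = (x - NB) mod r"
  have A1: "u < NB \<and> adj u x \<and> col u x = j" if "u \<in> A" for u
  proof -
    have uA: "{u,x} \<in> EE" "cc {u,x} = j" "u \<noteq> x" using that unfolding A_def by auto
    show ?thesis
    proof (cases "u < NB")
      case True
      then have "u < x" using x by simp
      then have "adj u x" "col u x = j" using uA mem_EE cc_ab by auto
      then show ?thesis using True by blast
    next
      case False
      have "cc {u,x} = (x - NB) mod r"
      proof (cases "u < x")
        case True
        then have "adj u x" using uA mem_EE by auto
        then have "col u x = (x - NB) mod r" using core_core[of u x] True False by simp
        then show ?thesis using cc_ab True by simp
      next
        case F2: False
        then have "x < u" using uA by simp
        then have "adj x u" using uA mem_EE by auto
        then have "col x u = (u - NB) mod r" using core_core[of x u] \<open>x < u\<close> x by simp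
        moreover have "(x - NB) mod r = (u - NB) mod r"
          using adj_CC[OF x(1) \<open>x < u\<close> \<open>adj x u\<close>] .
        ultimately show ?thesis using cc_ab \<open>x < u\<close> by simp
      qed
      then have False using uA ij by simp
      then show ?thesis ..
    qed
  qed
  show ?thesis
  proof (cases "x - NB < X")
    case True
    define base where "base = q*((x-NB) div (r*p)) + D*((r-1)*i + (if j < i then j else j - 1))"
    have "A \<subseteq> {base ..< base + D}"
    proof
      fix u assume "u \<in> A"
      then have h: "u < NB" "adj u x" "col u x = j" using A1 by auto
      have "(x-NB) div (r*p) = u div q \<and> (x-NB) mod r = (u mod q) div D div (r-1)"
        using adj_BC[OF h(1) x(1) h(2)] True by simp
      moreover have "jc i ((u mod q) div D mod (r-1)) = j"
        using h(3) col_unit[OF h(1) x(1) True] unfolding i_def by simp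
      ultimately show "u \<in> {base ..< base + D}"
        using unit_decomp[OF h(1), of i j] ij unfolding base_def i_def by simp
    qed
    then have "card A \<le> card {base ..< base + D}" by (intro card_mono) auto
    then show ?thesis unfolding A_def by simp
  next
    case False
    show ?thesis
    proof (cases "A = {}")
      case True then have "card A \<le> D" by simp
      then show ?thesis unfolding A_def .
    next
      case ne: False
      then obtain u0 where "u0 \<in> A" by blast
      then have "u0 < NB" using A1 by blast
      then have Dp: "1 \<le> D" using D_pos_if by simp
      have "A \<subseteq> {bidx ((x - NB - X) div R)}"
      proof
        fix u assume "u \<in> A"
        then have h: "u < NB" "adj u x" using A1 by auto
        then show "u \<in> {bidx ((x - NB - X) div R)}" using adj_BC[OF h(1) x(1) h(2)] False by simp
      qed
      then have "card A \<le> card {bidx ((x - NB - X) div R)}" by (intro card_mono) auto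
      then show ?thesis using Dp unfolding A_def by simp
    qed
  qed
qed

end

context cons begin

lemma n_facts: "n = NB + M" "NB + X + 2*R*R + r*(K+1) \<le> n"
proof -
  have "(r*(r-1)*D + r*p)*U = NB + X" unfolding NB_def X_def q_def by (simp add: algebra_simps)
  then have "NB + X + 2*R*R + r*(K+1) \<le> n" using big unfolding K_def R_def by simp
  then show "n = NB + M" "NB + X + 2*R*R + r*(K+1) \<le> n" unfolding M_def by auto
qed

lemma adjBB: "u < v \<Longrightarrow> v < NB \<Longrightarrow> v - u \<le> R \<Longrightarrow> adj u v"
  unfolding adj_def by blast
lemma adjUnit: "t < NB \<Longrightarrow> y < X \<Longrightarrow> y div (r*p) = t div q \<Longrightarrow> y mod r = (t mod q) div D div (r-1) \<Longrightarrow> adj t (NB + y)"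
  unfolding adj_def by simp
lemma adjExtra: "t < NB \<Longrightarrow> X \<le> y \<Longrightarrow> y < X + 2*R*R \<Longrightarrow> bidx ((y - X) div R) = t \<Longrightarrow> adj t (NB + y)"
  unfolding adj_def by simp
lemma adjCore: "NB \<le> a \<Longrightarrow> a < b \<Longrightarrow> (a - NB) mod r = (b - NB) mod r \<Longrightarrow> adj a b"
  unfolding adj_def by blast

lemma nbr_lt: "u < v \<Longrightarrow> v < n \<Longrightarrow> adj u v \<Longrightarrow> {u,v} \<in> EE \<and> u \<noteq> v" using mem_EE by auto
lemma nbr_gt: "v < u \<Longrightarrow> u < n \<Longrightarrow> adj v u \<Longrightarrow> {u,v} \<in> EE \<and> u \<noteq> v" using mem_EE by auto

lemma deg_core:
  assumes x: "NB \<le> x" "x < n"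
  shows "K \<le> degree EE x"
proof -
  define i where "i = (x - NB) mod r"
  have ir: "i < r" unfolding i_def using r_pos by simp
  define h where "h = (\<lambda>m. NB + i + r*m)"
  have inj: "inj_on h {..K}" unfolding h_def inj_on_def using r_pos by simp
  define A where "A = h ` {..K} - {x}"
  have cA: "K \<le> card A"
  proof -
    have "card (h ` {..K}) = K + 1" using card_image[OF inj] by simp
    moreover have "card (h ` {..K}) \<le> card A + 1"
    proof -
      have "h ` {..K} \<subseteq> insert x A" unfolding A_def by blast
      then have "card (h ` {..K}) \<le> card (insert x A)" by (intro card_mono) (auto simp: A_def)
      also have "\<dots> \<le> card A + 1" by (simp add: card_insert_le_m1)
      finally show ?thesis .
    qed
    ultimately show ?thesis by simp
  qed
  have "\<forall>a\<in>A. {a,x} \<in> EE \<and> a \<noteq> x"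
  proof
    fix a assume a: "a \<in> A"
    then obtain m where m: "m \<le> K" "a = NB + i + r*m" "a \<noteq> x" unfolding A_def h_def by blast
    have "i + r*m < r*(K+1)"
    proof -
      have "r*m \<le> r*K" using m(1) by simp
      moreover have "r*(K+1) = r + r*K" by (simp add: algebra_simps)
      ultimately show ?thesis using ir by linarith
    qed
    then have an: "a < n" using n_facts m(2) by simp
    have amod: "(a - NB) mod r = i" using m(2) ir by simp
    have "NB \<le> a" using m(2) by simp
    show "{a,x} \<in> EE \<and> a \<noteq> x"
    proof (cases "a < x")
      case True
      then show ?thesis using nbr_lt adjCore[OF \<open>NB \<le> a\<close> True] amod x unfolding i_def by simp
    next
      case False
      then have "x < a" using m(3) by simp
      then show ?thesis using nbr_gt adjCore[OF x(1) \<open>x < a\<close>] amod an unfolding i_def by simp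
    qed
  qed
  moreover have "finite A" unfolding A_def by simp
  ultimately have "card A \<le> degree EE x" using degree_ge[OF fin_EE] by blast
  then show ?thesis using cA by simp
qed

end

context cons begin

lemma unit_nbrs:
  assumes t: "t < NB"
    and that: "A3 = (\<lambda>t. (\<lambda>\<beta>. NB + (r*p*(t div q) + r*\<beta> + (t mod q) div D div (r-1))) ` {..<p})"
  shows "finite (A3 t) \<and> card (A3 t) = p \<and> A3 t \<subseteq> {NB..<NB+X} \<and> (\<forall>u\<in>A3 t. {u,t} \<in> EE \<and> u \<noteq> t)"
proof -
  have Dp: "D > 0" using D_pos_if t by simp
  have qp: "q > 0" using t unfolding NB_def by (cases "q = 0") auto
  define ut where "ut = t div q"
  define it where "it = (t mod q) div D div (r-1)"
  have ut: "ut < U" unfolding ut_def using t unfolding NB_def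
    by (simp add: less_mult_imp_div_less mult.commute)
  have it: "it < r"
  proof -
    have "t mod q < (r*(r-1))*D" using qp unfolding q_def by simp
    then have "(t mod q) div D < r*(r-1)" by (simp add: less_mult_imp_div_less)
    then show ?thesis unfolding it_def using r2 by (simp add: less_mult_imp_div_less)
  qed
  define h where "h = (\<lambda>\<beta>. NB + (r*p*ut + r*\<beta> + it))"
  have A3: "A3 t = h ` {..<p}" using that unfolding h_def ut_def it_def by simp
  have inj: "inj_on h {..<p}" unfolding h_def inj_on_def using r_pos by simp
  have props: "h b \<in> {NB..<NB+X} \<and> {h b, t} \<in> EE \<and> h b \<noteq> t" if b: "b < p" for b
  proof -
    define y where "y = r*p*ut + r*b + it"
    have lt: "r*b + it < r*p"
    proof -
      have "r*(b+1) \<le> r*p" using b by (intro mult_le_mono2) simp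
      then show ?thesis using it by (simp add: algebra_simps)
    qed
    have yX: "y < X"
    proof -
      have "r*p*(ut+1) \<le> r*p*U" using ut by (intro mult_le_mono2) simp
      then show ?thesis unfolding y_def X_def using lt by (simp add: algebra_simps)
    qed
    have ydiv: "y div (r*p) = ut"
    proof -
      have "y = (r*b + it) + (r*p)*ut" unfolding y_def by simp
      moreover have "r*p \<noteq> 0" using r_pos p1 by simp
      ultimately have "y div (r*p) = ut + (r*b + it) div (r*p)" using div_mult_self2[of "r*p" "r*b + it" ut] by simp
      then show ?thesis using lt by simp
    qed
    have ymod: "y mod r = it"
    proof -
      have "y = r*(p*ut + b) + it" unfolding y_def by (simp add: algebra_simps)
      then show ?thesis using it by simp
    qed
    have a: "adj t (NB + y)" by (rule adjUnit[OF t yX]) (use ydiv ymod ut_def it_def in auto)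
    have "NB + y < n" using n_facts yX by simp
    then have "{NB + y, t} \<in> EE \<and> NB + y \<noteq> t" using nbr_gt[of t "NB+y"] a t by simp
    moreover have "h b = NB + y" unfolding h_def y_def by simp
    ultimately show ?thesis using yX by simp
  qed
  show ?thesis using A3 inj props card_image[OF inj] by auto
qed

end

context cons begin

lemma extra_nbrs:
  assumes t: "t < NB" and bd: "t < R \<or> NB \<le> t + R"
  defines "l \<equiv> (if t < R then t else t + 2*R - NB)"
  shows "card {NB+X+l*R ..< NB+X+l*R+R} = R \<and> (\<forall>u\<in>{NB+X+l*R ..< NB+X+l*R+R}. {u,t} \<in> EE \<and> u \<noteq> t)"
proof -
  have Dp: "D > 0" using D_pos_if t by simp
  have Rp: "R > 0" unfolding R_def using Dp r_pos by simp
  have NR: "2*R \<le> NB" by (rule NB_ge)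
  have l2: "l < 2*R" unfolding l_def using t Rp by auto
  have bl: "bidx l = t" unfolding l_def bidx_def using t bd NR by auto
  have "\<forall>u\<in>{NB+X+l*R ..< NB+X+l*R+R}. {u,t} \<in> EE \<and> u \<noteq> t"
  proof
    fix u assume u: "u \<in> {NB+X+l*R ..< NB+X+l*R+R}"
    define w where "w = u - (NB+X+l*R)"
    have w: "w < R" "u = NB + (X + (l*R + w))" using u unfolding w_def by auto
    have "(l*R + w) div R = l" using w(1) by simp
    moreover have "l*R + w < 2*R*R"
    proof -
      have "(l+1)*R \<le> (2*R)*R" using l2 by (intro mult_le_mono1) simp
      then show ?thesis using w(1) by (simp add: algebra_simps)
    qed
    ultimately have a: "adj t u" using adjExtra[OF t, of "X + (l*R + w)"] bl w(2) by simp
    have "u < n" using n_facts w(2) \<open>l*R + w < 2*R*R\<close> by simp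
    then show "{u,t} \<in> EE \<and> u \<noteq> t" using nbr_gt[of t u] a t w(2) by simp
  qed
  then show ?thesis by simp
qed

lemma fwd_nbrs:
  assumes "t + R < NB"
  shows "\<forall>u\<in>{t<..t+R}. {u,t} \<in> EE \<and> u \<noteq> t"
proof
  fix u assume u: "u \<in> {t<..t+R}"
  then have "adj t u" using assms by (intro adjBB) auto
  moreover have "u < n" using u assms n_facts by simp
  ultimately show "{u,t} \<in> EE \<and> u \<noteq> t" using nbr_gt[of t u] u by simp
qed

lemma bwd_nbrs:
  assumes "t < NB"
  shows "\<forall>u\<in>{t-R..<t}. {u,t} \<in> EE \<and> u \<noteq> t"
proof
  fix u assume u: "u \<in> {t-R..<t}"
  then have "adj u t" using assms by (intro adjBB) auto
  moreover have "t < n" using assms n_facts by simp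
  ultimately show "{u,t} \<in> EE \<and> u \<noteq> t" using nbr_lt[of u t] u by simp
qed

end

context cons begin

lemma deg3:
  assumes "finite A" "finite B" "finite C" "A \<inter> B = {}" "A \<inter> C = {}" "B \<inter> C = {}"
    "\<forall>u\<in>A. {u,t} \<in> EE \<and> u \<noteq> t" "\<forall>u\<in>B. {u,t} \<in> EE \<and> u \<noteq> t" "\<forall>u\<in>C. {u,t} \<in> EE \<and> u \<noteq> t"
  shows "card A + card B + card C \<le> degree EE t"
proof -
  have "card (A \<union> B \<union> C) = card A + card B + card C"
    using assms(1-6) by (simp add: card_Un_disjoint Int_Un_distrib2)
  moreover have "card (A \<union> B \<union> C) \<le> degree EE t"
    by (rule degree_ge[OF fin_EE]) (use assms in auto)
  ultimately show ?thesis by simp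
qed

lemma deg_B:
  assumes t: "t < NB"
  shows "K \<le> degree EE t"
proof -
  define A3 where "A3 = (\<lambda>t. (\<lambda>\<beta>. NB + (r*p*(t div q) + r*\<beta> + (t mod q) div D div (r-1))) ` {..<p})"
  have U3: "finite (A3 t) \<and> card (A3 t) = p \<and> A3 t \<subseteq> {NB..<NB+X} \<and> (\<forall>u\<in>A3 t. {u,t} \<in> EE \<and> u \<noteq> t)"
    by (rule unit_nbrs[OF t A3_def])
  have NR: "2*R \<le> NB" by (rule NB_ge)
  define l where "l = (if t < R then t else t + 2*R - NB)"
  define A4 where "A4 = {NB+X+l*R ..< NB+X+l*R+R}"
  have K: "K = R + R + p" unfolding K_def R_def by simp
  show ?thesis
  proof (cases "t < R")
    case True
    have E4: "card A4 = R \<and> (\<forall>u\<in>A4. {u,t} \<in> EE \<and> u \<noteq> t)"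
      using extra_nbrs[OF t] True unfolding A4_def l_def by blast
    have "card {t<..t+R} + card (A3 t) + card A4 \<le> degree EE t"
      by (rule deg3) (use U3 E4 fwd_nbrs[of t] True NR t in \<open>auto simp: A4_def\<close>)
    then show ?thesis using U3 E4 K by simp
  next
    case False
    show ?thesis
    proof (cases "t + R < NB")
      case True
      have "card {t-R..<t} + card {t<..t+R} + card (A3 t) \<le> degree EE t"
        by (rule deg3) (use U3 fwd_nbrs[OF True] bwd_nbrs[OF t] True t in auto)
      then show ?thesis using U3 K False by simp
    next
      case F2: False
      have E4: "card A4 = R \<and> (\<forall>u\<in>A4. {u,t} \<in> EE \<and> u \<noteq> t)"
        using extra_nbrs[OF t] F2 False unfolding A4_def l_def by auto
      have "card {t-R..<t} + card (A3 t) + card A4 \<le> degree EE t"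
        by (rule deg3) (use U3 E4 bwd_nbrs[OF t] t in \<open>auto simp: A4_def\<close>)
      then show ?thesis using U3 E4 K False by simp
    qed
  qed
qed

lemma mindeg: "min_degree_ge {0..<n} EE K"
  unfolding min_degree_ge_def
proof
  fix v assume "v \<in> {0..<n}"
  then show "K \<le> degree EE v" using deg_B deg_core by (cases "v < NB") auto
qed

end

context cons begin

lemma card_SS: "card (SS j) \<le> M div r + 1"
proof -
  have "SS j \<subseteq> (\<lambda>m. NB + j + r*m) ` {..M div r}"
  proof
    fix v assume "v \<in> SS j"
    then have v: "NB \<le> v" "v < n" "(v - NB) mod r = j" unfolding SS_def by auto
    have "v - NB = r*((v-NB) div r) + j" using v(3) by (metis div_mult_mod_eq mult.commute)
    moreover have "(v-NB) div r \<le> M div r" using v n_facts by (intro div_le_mono) simp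
    ultimately show "v \<in> (\<lambda>m. NB + j + r*m) ` {..M div r}" using v(1)
      by (intro image_eqI[where x="(v-NB) div r"]) auto
  qed
  then have "card (SS j) \<le> card ((\<lambda>m. NB + j + r*m) ` {..M div r})" by (intro card_mono) auto
  also have "\<dots> \<le> card {..M div r}" by (rule card_image_le) simp
  finally show ?thesis by simp
qed

lemma fG_bound: "fG {0..<n} EE (Suc D) r \<le> M div r + 1"
proof (rule fG_le[OF colouring])
  fix i W F assume ms: "mono_subgraph {0..<n} EE cc i W F" and md: "min_degree_ge W F (Suc D)"
  have sg: "\<forall>e\<in>EE. card e = 2" using simple unfolding simple_graph_def by blast
  have "W \<subseteq> SS i"
  proof (rule peel[OF ms md _ sg, where \<rho>=rho])
    fix v assume v: "v \<in> {0..<n}" "v \<notin> SS i"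
    show "card {u\<in>{0..<n}. {u,v} \<in> EE \<and> cc {u,v} = i \<and> (u \<in> SS i \<or> rho u \<ge> rho v) \<and> u \<noteq> v} \<le> D"
    proof (cases "v < NB")
      case True then show ?thesis by (rule peel_B)
    next
      case False
      then have "(v - NB) mod r \<noteq> i" using v unfolding SS_def by auto
      then show ?thesis using peel_core[of v i] False v by simp
    qed
  qed simp
  then have "card W \<le> card (SS i)" by (intro card_mono) (auto simp: SS_def)
  then show "card W \<le> M div r + 1" using card_SS[of i] by simp
qed

end

context cons begin
lemma final: "f n (2*r*D+p) (Suc D) r \<le> (n - r*(r-1)*D*U) div r + 1"
proof -
  have "f n K (Suc D) r \<le> fG {0..<n} EE (Suc D) r" by (rule f_le[OF simple mindeg r_pos])
  also have "\<dots> \<le> M div r + 1" by (rule fG_bound)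
  finally show ?thesis unfolding K_def M_def NB_def q_def .
qed
end

lemma big_case:
  fixes r D p n :: nat
  assumes r2: "2 \<le> r" and p1: "1 \<le> p"
  defines "m \<equiv> r*(r-1)*D + r*p"
  defines "C0 \<equiv> 2*(r*D)*(r*D) + r*(2*r*D + p + 1)"
  assumes n: "C0 + 2*m \<le> n"
  shows "real (f n (2*r*D+p) (Suc D) r) \<le> real n * real p / real m + real (m + C0 + 1)"
proof -
  have mp: "m > 0" unfolding m_def using r2 p1 by simp
  define U where "U = (n - C0) div m"
  have U2: "2 \<le> U"
  proof -
    have "2*m \<le> n - C0" using n by simp
    then have "(2*m) div m \<le> (n - C0) div m" by (rule div_le_mono)
    moreover have "(2*m) div m = 2" using mp by simp
    ultimately show ?thesis unfolding U_def by simp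
  qed
  have dm: "U * m + (n - C0) mod m = n - C0" unfolding U_def by (rule div_mult_mod_eq)
  have mm: "(n - C0) mod m < m" using mp by simp
  have dm2: "m * U + (n - C0) mod m = n - C0" using dm by (simp add: mult.commute)
  have mU: "m*U \<le> n - C0" using dm2 by linarith
  have mU2: "n - C0 < m*(U+1)"
  proof -
    have e: "m*(U+1) = m*U + m" by simp
    show ?thesis unfolding e using dm2 mm by linarith
  qed
  have "cons r D p U n"
    by unfold_locales (use r2 p1 U2 mU n in \<open>auto simp: m_def C0_def\<close>)
  then have fb: "f n (2*r*D+p) (Suc D) r \<le> (n - r*(r-1)*D*U) div r + 1" by (rule cons.final)
  define Mn where "Mn = n - r*(r-1)*D*U"
  define Q where "Q = r*(r-1)*D*U"
  define P where "P = r*p*U"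
  have hq: "m*U = Q + P" unfolding m_def Q_def P_def by (simp add: algebra_simps)
  have mU3: "n - C0 < m*U + m" using mU2 by simp
  have mU4: "n - C0 < Q + P + m" using mU3 unfolding hq .
  have "Mn < m + C0 + P" unfolding Mn_def Q_def[symmetric] using mU4 n mp by arith
  then have "Mn < m + C0 + r*p*U" unfolding P_def .
  moreover have "r * (Mn div r) \<le> Mn" by simp
  ultimately have "r * (Mn div r) < r * (m + C0 + p*U)"
  proof -
    assume a: "Mn < m + C0 + r*p*U" "r * (Mn div r) \<le> Mn"
    have "(m + C0)*1 \<le> (m + C0)*r" using r2 by (intro mult_le_mono2) simp
    moreover have "r * (m + C0 + p*U) = (m + C0)*r + r*p*U" by (simp add: algebra_simps)
    ultimately have "m + C0 + r*p*U \<le> r * (m + C0 + p*U)" by simp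
    then show ?thesis using a by linarith
  qed
  then have "Mn div r < m + C0 + p*U" by (simp only: mult_less_cancel1)
  then have fnat: "f n (2*r*D+p) (Suc D) r \<le> m + C0 + 1 + p*U" using fb unfolding Mn_def by simp
  have "real (p*U) * real m \<le> real n * real p"
  proof -
    have "m*U \<le> n" using mU by simp
    then have "p*(m*U) \<le> p*n" by (rule mult_le_mono2)
    then have "p*U*m \<le> n*p" by (simp add: algebra_simps)
    then show ?thesis by (metis of_nat_le_iff of_nat_mult)
  qed
  then have "real (p*U) \<le> real n * real p / real m" using mp by (simp add: pos_le_divide_eq)
  moreover have "real (f n (2*r*D+p) (Suc D) r) \<le> real (m + C0 + 1 + p*U)"
    using fnat by (simp only: of_nat_le_iff)
  moreover have "real (m + C0 + 1 + p*U) = real (m + C0 + 1) + real (p*U)" by (simp only: of_nat_add)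
  ultimately show ?thesis by linarith
qed

theorem theorem1p2:
  fixes d r k :: nat
  assumes "d \<ge> 1" and "r \<ge> 2" and "k > 2 * r * (d - 1)"
  shows "\<exists>C::real. \<forall>n::nat. n > k \<longrightarrow>
     real (f n k d r) \<le> real n * (real k - 2 * real r * (real d - 1))
        / (real r * (real k - (real r + 1) * (real d - 1))) + C"
proof -
  define D where "D = d - 1"
  define p where "p = k - 2*r*D"
  have d: "d = Suc D" unfolding D_def using assms(1) by simp
  have k: "k = 2*r*D + p" and p1: "1 \<le> p" unfolding p_def D_def using assms(3) by auto
  define m where "m = r*(r-1)*D + r*p"
  define C0 where "C0 = 2*(r*D)*(r*D) + r*(2*r*D + p + 1)"
  have mp: "m > 0" unfolding m_def using assms(2) p1 by simp
  have num: "real k - 2 * real r * (real d - 1) = real p"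
    unfolding k d by simp
  have den: "real r * (real k - (real r + 1) * (real d - 1)) = real m"
  proof -
    have r1: "real (r - 1) = real r - 1" using assms(2) by simp
    have "real m = real r * real (r - 1) * real D + real r * real p"
      unfolding m_def by (simp only: of_nat_add of_nat_mult)
    then have "real m = real r * (real r - 1) * real D + real r * real p" unfolding r1 .
    then show ?thesis unfolding k d by (simp add: algebra_simps)
  qed
  have nonneg: "0 \<le> real n * real p / real m" for n by simp
  show ?thesis
  proof (intro exI[of _ "real (m + C0 + 1) + real (C0 + 2*m)"] allI impI)
    fix n :: nat assume nk: "k < n"
    show "real (f n k d r) \<le> real n * (real k - 2 * real r * (real d - 1))
        / (real r * (real k - (real r + 1) * (real d - 1))) + (real (m + C0 + 1) + real (C0 + 2*m))"
    proof (cases "C0 + 2*m \<le> n")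
      case True
      have "real (f n (2*r*D+p) (Suc D) r) \<le> real n * real p / real m + real (m + C0 + 1)"
        using big_case[OF assms(2) p1 True[unfolded m_def C0_def]] unfolding m_def C0_def by simp
      then show ?thesis unfolding num den using k d by simp
    next
      case False
      have "f n k d r \<le> n" using f_le_n[OF nk] assms(2) by simp
      then have "real (f n k d r) \<le> real (C0 + 2*m)" using False by simp
      moreover have "0 \<le> real (m + C0 + 1)" by simp
      ultimately show ?thesis unfolding num den using nonneg[of n] by linarith
    qed
  qed
qed

end
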